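(* Let $X_2$ be a first-order linear partial differential operator and $H\neq 0$ a linear partial differential operator, both in $\mathbf{F}[D_{x_1},\ldots,D_{x_n}]$. Then the element $\omega = -[X_2,H]H^{-1}$ of the skew Ore field $\mathbf{F}(D_{x_1},\ldots,D_{x_n})$ is a differential operator (i.e. lies in $\mathbf{F}[D_{x_1},\ldots,D_{x_n}]$) if and only if there is a function $\psi\in\mathbf{F}$ such that $HX_2 = (X_2+\psi)H$.
   Context: $\mathbf{F}$ is a differential field of functions of $x_1,\ldots,x_n$; $\mathbf{F}[D_{x_1},\ldots,D_{x_n}]$ is the ring of linear partial differential operators with coefficients in $\mathbf{F}$, and $\mathbf{F}(D_{x_1},\ldots,D_{x_n})$ its skew Ore field of formal left fractions $P^{-1}Q$ (with $P^{-1}Q\sim K^{-1}N$ iff $SP=TK$, $SQ=TN$ for some nonzero operators $S,T$). $[A,B]=AB-BA$. *)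

theory Defs
  imports Main
begin

text \<open>
  The differential field F is modelled as a field type 'a (characteristic 0, as a field
  of functions) equipped with n commuting derivations delta 0, ..., delta (n-1),
  delta i playing the role of the partial derivative with respect to x_(i+1).
\<close>

definition diff_field :: "nat \<Rightarrow> (nat \<Rightarrow> 'a::field \<Rightarrow> 'a) \<Rightarrow> bool" where
  "diff_field n \<delta> \<longleftrightarrow>
     (\<forall>i<n. \<forall>a b. \<delta> i (a + b) = \<delta> i a + \<delta> i b \<and> \<delta> i (a * b) = \<delta> i a * b + a * \<delta> i b) \<and>
     (\<forall>i<n. \<forall>j<n. \<forall>a. \<delta> i (\<delta> j a) = \<delta> j (\<delta> i a))"

text \<open>A linear partial differential operator sum_alpha P(alpha) D^alpha is represented by
  its coefficient function P, which has finite support consisting of multi-indices.\<close>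

definition multi_index :: "nat \<Rightarrow> (nat \<Rightarrow> nat) \<Rightarrow> bool" where
  "multi_index n \<alpha> \<longleftrightarrow> (\<forall>i\<ge>n. \<alpha> i = 0)"

definition is_pdo :: "nat \<Rightarrow> ((nat \<Rightarrow> nat) \<Rightarrow> 'a::zero) \<Rightarrow> bool" where
  "is_pdo n P \<longleftrightarrow> finite {\<alpha>. P \<alpha> \<noteq> 0} \<and> (\<forall>\<alpha>. P \<alpha> \<noteq> 0 \<longrightarrow> multi_index n \<alpha>)"

definition mi_order :: "nat \<Rightarrow> (nat \<Rightarrow> nat) \<Rightarrow> nat" where
  "mi_order n \<alpha> = (\<Sum>i<n. \<alpha> i)"

definition first_order :: "nat \<Rightarrow> ((nat \<Rightarrow> nat) \<Rightarrow> 'a::zero) \<Rightarrow> bool" where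
  "first_order n P \<longleftrightarrow> (\<forall>\<alpha>. P \<alpha> \<noteq> 0 \<longrightarrow> mi_order n \<alpha> \<le> 1) \<and> (\<exists>\<alpha>. P \<alpha> \<noteq> 0 \<and> mi_order n \<alpha> = 1)"

fun dpow :: "nat \<Rightarrow> (nat \<Rightarrow> 'a \<Rightarrow> 'a) \<Rightarrow> (nat \<Rightarrow> nat) \<Rightarrow> 'a \<Rightarrow> 'a" where
  "dpow 0 \<delta> \<gamma> b = b"
| "dpow (Suc k) \<delta> \<gamma> b = (\<delta> k ^^ \<gamma> k) (dpow k \<delta> \<gamma> b)"

definition mbinom :: "nat \<Rightarrow> (nat \<Rightarrow> nat) \<Rightarrow> (nat \<Rightarrow> nat) \<Rightarrow> nat" where
  "mbinom n \<alpha> \<gamma> = (\<Prod>i<n. \<alpha> i choose \<gamma> i)"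

text \<open>Composition of operators, via the Leibniz rule
  (a D^alpha)(b D^beta) = sum_(gamma <= alpha) C(alpha,gamma) a delta^gamma(b) D^(alpha-gamma+beta).\<close>
definition pdo_mult :: "nat \<Rightarrow> (nat \<Rightarrow> 'a::field \<Rightarrow> 'a) \<Rightarrow>
    ((nat \<Rightarrow> nat) \<Rightarrow> 'a) \<Rightarrow> ((nat \<Rightarrow> nat) \<Rightarrow> 'a) \<Rightarrow> ((nat \<Rightarrow> nat) \<Rightarrow> 'a)" where
  "pdo_mult n \<delta> P Q = (\<lambda>\<mu>.
     \<Sum>\<alpha>\<in>{\<alpha>. P \<alpha> \<noteq> 0}. \<Sum>\<beta>\<in>{\<beta>. Q \<beta> \<noteq> 0}. \<Sum>\<gamma>\<in>{\<gamma>. \<forall>i. \<gamma> i \<le> \<alpha> i}.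
       (if (\<lambda>i. \<alpha> i - \<gamma> i + \<beta> i) = \<mu>
        then of_nat (mbinom n \<alpha> \<gamma>) * P \<alpha> * dpow n \<delta> \<gamma> (Q \<beta>) else 0))"

definition pdo_add :: "((nat \<Rightarrow> nat) \<Rightarrow> 'a::ab_group_add) \<Rightarrow> ((nat \<Rightarrow> nat) \<Rightarrow> 'a) \<Rightarrow> ((nat \<Rightarrow> nat) \<Rightarrow> 'a)" where
  "pdo_add P Q = (\<lambda>\<mu>. P \<mu> + Q \<mu>)"

definition pdo_neg :: "((nat \<Rightarrow> nat) \<Rightarrow> 'a::ab_group_add) \<Rightarrow> ((nat \<Rightarrow> nat) \<Rightarrow> 'a)" where
  "pdo_neg P = (\<lambda>\<mu>. - P \<mu>)"

definition pdo_const :: "'a::zero \<Rightarrow> ((nat \<Rightarrow> nat) \<Rightarrow> 'a)" where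
  "pdo_const \<psi> = (\<lambda>\<mu>. if \<mu> = (\<lambda>_. 0) then \<psi> else 0)"

definition pdo_zero :: "(nat \<Rightarrow> nat) \<Rightarrow> 'a::zero" where
  "pdo_zero = (\<lambda>_. 0)"

definition pdo_comm :: "nat \<Rightarrow> (nat \<Rightarrow> 'a::field \<Rightarrow> 'a) \<Rightarrow>
    ((nat \<Rightarrow> nat) \<Rightarrow> 'a) \<Rightarrow> ((nat \<Rightarrow> nat) \<Rightarrow> 'a) \<Rightarrow> ((nat \<Rightarrow> nat) \<Rightarrow> 'a)" where
  "pdo_comm n \<delta> A B = (\<lambda>\<mu>. pdo_mult n \<delta> A B \<mu> - pdo_mult n \<delta> B A \<mu>)"

text \<open>The element A H^(-1) of the skew Ore field F(D_1,...,D_n) (H nonzero) lies in the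
  subring F[D_1,...,D_n] iff it equals (the image of) some operator W; since H is invertible
  in the skew field this is the condition W H = A.\<close>
definition rquot_is_pdo :: "nat \<Rightarrow> (nat \<Rightarrow> 'a::field \<Rightarrow> 'a) \<Rightarrow>
    ((nat \<Rightarrow> nat) \<Rightarrow> 'a) \<Rightarrow> ((nat \<Rightarrow> nat) \<Rightarrow> 'a) \<Rightarrow> bool" where
  "rquot_is_pdo n \<delta> A H \<longleftrightarrow> (\<exists>W. is_pdo n W \<and> pdo_mult n \<delta> W H = A)"

end

theory Submission
  imports Defs
begin

lemma dpow_zero: "dpow k \<delta> (\<lambda>_. 0) b = b"
  by (induction k) auto

lemma mbinom_zero: "mbinom n \<alpha> (\<lambda>_. 0) = 1"
  by (simp add: mbinom_def)

lemma pdo_mult_super: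
  assumes "finite S" "{\<alpha>. P \<alpha> \<noteq> 0} \<subseteq> S"
  shows "pdo_mult n \<delta> P Q \<mu> = (\<Sum>\<alpha>\<in>S. \<Sum>\<beta>\<in>{\<beta>. Q \<beta> \<noteq> 0}. \<Sum>\<gamma>\<in>{\<gamma>. \<forall>i. \<gamma> i \<le> \<alpha> i}.
       (if (\<lambda>i. \<alpha> i - \<gamma> i + \<beta> i) = \<mu>
        then of_nat (mbinom n \<alpha> \<gamma>) * P \<alpha> * dpow n \<delta> \<gamma> (Q \<beta>) else 0))"
  unfolding pdo_mult_def
  apply (rule sum.mono_neutral_left[OF assms])
  apply (intro ballI sum.neutral)
  apply auto
  done

lemma pdo_mult_add_left:
  assumes "is_pdo n P" "is_pdo n Q"
  shows "pdo_mult n \<delta> (pdo_add P Q) R \<mu> = pdo_mult n \<delta> P R \<mu> + pdo_mult n \<delta> Q R \<mu>"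
proof -
  let ?S = "{\<alpha>. P \<alpha> \<noteq> 0} \<union> {\<alpha>. Q \<alpha> \<noteq> 0}"
  have f: "finite ?S" using assms by (auto simp: is_pdo_def)
  have s: "{\<alpha>. pdo_add P Q \<alpha> \<noteq> 0} \<subseteq> ?S" by (auto simp: pdo_add_def)
  have sp: "{\<alpha>. P \<alpha> \<noteq> 0} \<subseteq> ?S" and sq: "{\<alpha>. Q \<alpha> \<noteq> 0} \<subseteq> ?S" by auto
  show ?thesis
    unfolding pdo_mult_super[OF f s] pdo_mult_super[OF f sp] pdo_mult_super[OF f sq]
    apply (simp only: sum.distrib[symmetric])
    by (intro sum.cong refl) (auto simp: pdo_add_def algebra_simps)
qed

lemma const_pdo: "is_pdo n (pdo_const \<psi>)"
  by (auto simp: is_pdo_def pdo_const_def multi_index_def)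

lemma mi_order_add: "mi_order n (\<lambda>i. \<alpha> i + \<beta> i) = mi_order n \<alpha> + mi_order n \<beta>"
  by (simp add: mi_order_def sum.distrib)

lemma fin_below:
  assumes ma: "multi_index n \<alpha>"
  shows "finite {\<gamma>. \<forall>i. \<gamma> i \<le> \<alpha> i}"
proof -
  let ?S = "{\<gamma>. \<forall>i. \<gamma> i \<le> \<alpha> i}"
  let ?M = "mi_order n \<alpha>"
  have inj: "inj_on (\<lambda>\<gamma>. map \<gamma> [0..<n]) ?S"
  proof (rule inj_onI)
    fix x y assume x: "x \<in> ?S" and y: "y \<in> ?S" and e: "map x [0..<n] = map y [0..<n]"
    show "x = y"
    proof (rule ext)
      fix i show "x i = y i"
      proof (cases "i < n")
        case True then show ?thesis using e by simp
      next
        case False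
        then have "\<alpha> i = 0" using ma by (simp add: multi_index_def)
        then show ?thesis using x y by (metis (mono_tags, lifting) le_zero_eq mem_Collect_eq)
      qed
    qed
  qed
  have sub: "(\<lambda>\<gamma>. map \<gamma> [0..<n]) ` ?S \<subseteq> {xs. set xs \<subseteq> {..?M} \<and> length xs = n}"
  proof
    fix xs assume "xs \<in> (\<lambda>\<gamma>. map \<gamma> [0..<n]) ` ?S"
    then obtain \<gamma> where g: "\<gamma> \<in> ?S" and xs: "xs = map \<gamma> [0..<n]" by blast
    have "\<gamma> i \<le> ?M" if "i < n" for i
    proof -
      have "\<alpha> i \<le> ?M" unfolding mi_order_def by (rule member_le_sum) (use that in auto)
      then show ?thesis using g by (metis (mono_tags, lifting) mem_Collect_eq order_trans)
    qed
    then show "xs \<in> {xs. set xs \<subseteq> {..?M} \<and> length xs = n}" using xs by auto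
  qed
  have "finite ((\<lambda>\<gamma>. map \<gamma> [0..<n]) ` ?S)"
    by (rule finite_subset[OF sub]) (rule finite_lists_length_eq, simp)
  then show ?thesis using inj by (rule finite_imageD)
qed

lemma symb:
  assumes P: "is_pdo n P" and Q: "is_pdo n Q"
    and bp: "\<And>\<alpha>. P \<alpha> \<noteq> 0 \<Longrightarrow> mi_order n \<alpha> \<le> p"
    and bq: "\<And>\<alpha>. Q \<alpha> \<noteq> 0 \<Longrightarrow> mi_order n \<alpha> \<le> q"
    and m: "p + q \<le> mi_order n \<mu>"
  shows "pdo_mult n \<delta> P Q \<mu> = (\<Sum>\<alpha>\<in>{\<alpha>. P \<alpha> \<noteq> 0}. \<Sum>\<beta>\<in>{\<beta>. Q \<beta> \<noteq> 0}.
           (if (\<lambda>i. \<alpha> i + \<beta> i) = \<mu> then P \<alpha> * Q \<beta> else 0))"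
  unfolding pdo_mult_def
proof (intro sum.cong refl)
  fix \<alpha> \<beta> assume a: "\<alpha> \<in> {\<alpha>. P \<alpha> \<noteq> 0}" and b: "\<beta> \<in> {\<beta>. Q \<beta> \<noteq> 0}"
  have ma: "multi_index n \<alpha>" using a P by (auto simp: is_pdo_def)
  have mb: "multi_index n \<beta>" using b Q by (auto simp: is_pdo_def)
  have key: "\<gamma> = (\<lambda>_. 0)" if g: "\<forall>i. \<gamma> i \<le> \<alpha> i" and e: "(\<lambda>i. \<alpha> i - \<gamma> i + \<beta> i) = \<mu>" for \<gamma>
  proof -
    have "(\<Sum>i<n. \<alpha> i - \<gamma> i + \<beta> i) + (\<Sum>i<n. \<gamma> i) = (\<Sum>i<n. (\<alpha> i - \<gamma> i + \<beta> i) + \<gamma> i)"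
      by (rule sum.distrib[symmetric])
    also have "\<dots> = (\<Sum>i<n. \<alpha> i + \<beta> i)"
    proof (rule sum.cong[OF refl])
      fix i have "\<gamma> i \<le> \<alpha> i" using g by blast
      then show "\<alpha> i - \<gamma> i + \<beta> i + \<gamma> i = \<alpha> i + \<beta> i" by arith
    qed
    also have "\<dots> = (\<Sum>i<n. \<alpha> i) + (\<Sum>i<n. \<beta> i)" by (rule sum.distrib)
    finally have "(\<Sum>i<n. \<alpha> i - \<gamma> i + \<beta> i) + (\<Sum>i<n. \<gamma> i) = (\<Sum>i<n. \<alpha> i) + (\<Sum>i<n. \<beta> i)" .
    moreover have "(\<Sum>i<n. \<alpha> i - \<gamma> i + \<beta> i) = mi_order n \<mu>"
      unfolding mi_order_def e[symmetric] by (rule refl)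
    moreover have "mi_order n \<alpha> \<le> p" "mi_order n \<beta> \<le> q" using a b bp bq by auto
    ultimately have "(\<Sum>i<n. \<gamma> i) = 0" using m unfolding mi_order_def by linarith
    hence "\<forall>i<n. \<gamma> i = 0" by simp
    moreover have "\<forall>i\<ge>n. \<gamma> i = 0"
    proof (intro allI impI)
      fix i assume "n \<le> i"
      then have "\<alpha> i = 0" using ma by (simp add: multi_index_def)
      then show "\<gamma> i = 0" using g by (metis le_zero_eq)
    qed
    ultimately have h: "\<And>i. \<gamma> i = 0" by (metis not_less)
    show ?thesis by (rule ext) (rule h)
  qed
  have "(\<Sum>\<gamma>\<in>{\<gamma>. \<forall>i. \<gamma> i \<le> \<alpha> i}.
       (if (\<lambda>i. \<alpha> i - \<gamma> i + \<beta> i) = \<mu>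
        then of_nat (mbinom n \<alpha> \<gamma>) * P \<alpha> * dpow n \<delta> \<gamma> (Q \<beta>) else 0)) =
     (\<Sum>\<gamma>\<in>{\<gamma>. \<forall>i. \<gamma> i \<le> \<alpha> i}. if \<gamma> = (\<lambda>_. 0) then
       (if (\<lambda>i. \<alpha> i + \<beta> i) = \<mu> then P \<alpha> * Q \<beta> else 0) else 0)"
  proof (rule sum.cong[OF refl])
    fix \<gamma> assume gm: "\<gamma> \<in> {\<gamma>. \<forall>i. \<gamma> i \<le> \<alpha> i}"
    show "(if (\<lambda>i. \<alpha> i - \<gamma> i + \<beta> i) = \<mu>
        then of_nat (mbinom n \<alpha> \<gamma>) * P \<alpha> * dpow n \<delta> \<gamma> (Q \<beta>) else 0) =
      (if \<gamma> = (\<lambda>_. 0) then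
       (if (\<lambda>i. \<alpha> i + \<beta> i) = \<mu> then P \<alpha> * Q \<beta> else 0) else 0)"
    proof (cases "\<gamma> = (\<lambda>_. 0)")
      case True
      then show ?thesis by (simp add: dpow_zero mbinom_zero)
    next
      case False
      then have "(\<lambda>i. \<alpha> i - \<gamma> i + \<beta> i) \<noteq> \<mu>" using key gm by blast
      then show ?thesis using False by simp
    qed
  qed
  also have "\<dots> = (if (\<lambda>i. \<alpha> i + \<beta> i) = \<mu> then P \<alpha> * Q \<beta> else 0)"
    using fin_below[OF ma] by (simp add: sum.delta)
  finally show "(\<Sum>\<gamma>\<in>{\<gamma>. \<forall>i. \<gamma> i \<le> \<alpha> i}.
       (if (\<lambda>i. \<alpha> i - \<gamma> i + \<beta> i) = \<mu>
        then of_nat (mbinom n \<alpha> \<gamma>) * P \<alpha> * dpow n \<delta> \<gamma> (Q \<beta>) else 0)) =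
     (if (\<lambda>i. \<alpha> i + \<beta> i) = \<mu> then P \<alpha> * Q \<beta> else 0)" .
qed

lemma symb_comm:
  fixes A B :: "(nat \<Rightarrow> nat) set"
  shows "(\<Sum>\<alpha>\<in>A. \<Sum>\<beta>\<in>B. (if (\<lambda>i. \<alpha> i + \<beta> i) = \<mu> then (P \<alpha> :: 'a::comm_ring) * Q \<beta> else 0))
   = (\<Sum>\<beta>\<in>B. \<Sum>\<alpha>\<in>A. (if (\<lambda>i. \<beta> i + \<alpha> i) = \<mu> then Q \<beta> * P \<alpha> else 0))"
proof (subst sum.swap, intro sum.cong refl)
  fix x xa :: "nat \<Rightarrow> nat"
  have "(\<lambda>i. x i + xa i) = (\<lambda>i. xa i + x i)" by (rule ext) (rule add.commute)
  then show "(if (\<lambda>i. x i + xa i) = \<mu> then P x * Q xa else 0) = (if (\<lambda>i. xa i + x i) = \<mu> then Q xa * P x else 0)"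
    by (simp add: mult.commute)
qed

lemma wbound:
  assumes "\<forall>i<n. \<alpha> i < N"
  shows "(\<Sum>i<n. \<alpha> i * N^i) < (N::nat)^n"
  using assms
proof (induction n)
  case 0 then show ?case by simp
next
  case (Suc n)
  have "(\<Sum>i<Suc n. \<alpha> i * N^i) = (\<Sum>i<n. \<alpha> i * N^i) + \<alpha> n * N^n" by simp
  also have "\<dots> < N^n + \<alpha> n * N^n" using Suc by simp
  also have "\<dots> = (\<alpha> n + 1) * N^n" by simp
  also have "\<dots> \<le> N * N^n" using Suc.prems by (intro mult_right_mono) auto
  finally show ?case by simp
qed

lemma winj:
  assumes "\<forall>i<n. \<alpha> i < N" "\<forall>i<n. \<beta> i < N"
    and "(\<Sum>i<n. \<alpha> i * N^i) = (\<Sum>i<n. \<beta> i * (N::nat)^i)"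
  shows "\<forall>i<n. \<alpha> i = \<beta> i"
  using assms
proof (induction n)
  case 0 then show ?case by simp
next
  case (Suc n)
  let ?A = "\<Sum>i<n. \<alpha> i * N^i" and ?B = "\<Sum>i<n. \<beta> i * N^i"
  have A: "?A < N^n" by (rule wbound) (use Suc.prems in simp)
  have B: "?B < N^n" by (rule wbound) (use Suc.prems in simp)
  have pos: "N^n > 0" using A by linarith
  have e: "?A + \<alpha> n * N^n = ?B + \<beta> n * N^n" using Suc.prems by simp
  have "(?A + \<alpha> n * N^n) div N^n = \<alpha> n" using A pos by simp
  moreover have "(?B + \<beta> n * N^n) div N^n = \<beta> n" using B pos by simp
  ultimately have an: "\<alpha> n = \<beta> n" using e by simp
  then have AB: "?A = ?B" using e by simp
  have "\<forall>i<n. \<alpha> i = \<beta> i"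
    by (rule Suc.IH) (use Suc.prems AB in simp_all)
  then show ?case using an less_Suc_eq by auto
qed


definition wt :: "nat \<Rightarrow> nat \<Rightarrow> (nat \<Rightarrow> nat) \<Rightarrow> nat" where
  "wt n N \<alpha> = (\<Sum>i<n. \<alpha> i * N^i)"

lemma wt_add: "wt n N (\<lambda>i. \<alpha> i + \<beta> i) = wt n N \<alpha> + wt n N \<beta>"
  by (simp add: wt_def sum.distrib distrib_right)

lemma coord_le: "i < n \<Longrightarrow> \<alpha> i \<le> mi_order n \<alpha>"
  unfolding mi_order_def by (rule member_le_sum) auto

lemma max_wt:
  assumes "finite T" "T \<noteq> {}"
  obtains a where "a \<in> T" "\<And>x. x \<in> T \<Longrightarrow> wt n N x \<le> wt n N a"
proof -
  have "Max (wt n N ` T) \<in> wt n N ` T" using assms by simp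
  then obtain a where a: "a \<in> T" "wt n N a = Max (wt n N ` T)" by auto
  show ?thesis
    by (rule that[OF a(1)]) (simp add: a(2) assms)
qed

lemma top_nonzero:
  assumes W: "is_pdo n W" and H: "is_pdo n H"
    and be: "\<And>\<alpha>. W \<alpha> \<noteq> 0 \<Longrightarrow> mi_order n \<alpha> \<le> e" and ee: "\<exists>\<alpha>. W \<alpha> \<noteq> 0 \<and> mi_order n \<alpha> = e"
    and bd: "\<And>\<alpha>. H \<alpha> \<noteq> 0 \<Longrightarrow> mi_order n \<alpha> \<le> d" and ed: "\<exists>\<alpha>. H \<alpha> \<noteq> 0 \<and> mi_order n \<alpha> = d"
  shows "\<exists>\<mu>. mi_order n \<mu> = e + d \<and>
    (\<Sum>\<alpha>\<in>{\<alpha>. W \<alpha> \<noteq> 0}. \<Sum>\<beta>\<in>{\<beta>. H \<beta> \<noteq> 0}.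
           (if (\<lambda>i. \<alpha> i + \<beta> i) = \<mu> then W \<alpha> * (H \<beta> :: 'a::field) else 0)) \<noteq> 0"
proof -
  define N where "N = e + d + 1"
  define TW where "TW = {\<alpha>. W \<alpha> \<noteq> 0 \<and> mi_order n \<alpha> = e}"
  define TH where "TH = {\<alpha>. H \<alpha> \<noteq> 0 \<and> mi_order n \<alpha> = d}"
  have fW: "finite {\<alpha>. W \<alpha> \<noteq> 0}" and fH: "finite {\<alpha>. H \<alpha> \<noteq> 0}"
    using W H by (auto simp: is_pdo_def)
  have "finite TW" unfolding TW_def by (rule finite_subset[OF _ fW]) auto
  moreover have "TW \<noteq> {}" using ee by (auto simp: TW_def)
  ultimately obtain a where a: "a \<in> TW" "\<And>x. x \<in> TW \<Longrightarrow> wt n N x \<le> wt n N a"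
    by (rule max_wt[where n=n and N=N]) blast+
  have "finite TH" unfolding TH_def by (rule finite_subset[OF _ fH]) auto
  moreover have "TH \<noteq> {}" using ed by (auto simp: TH_def)
  ultimately obtain b where b: "b \<in> TH" "\<And>x. x \<in> TH \<Longrightarrow> wt n N x \<le> wt n N b"
    by (rule max_wt[where n=n and N=N]) blast+
  define \<mu> where "\<mu> = (\<lambda>i. a i + b i)"
  have ordmu: "mi_order n \<mu> = e + d" using a b by (simp add: \<mu>_def mi_order_add TW_def TH_def)
  have uniq: "x = a \<and> y = b" if x: "W x \<noteq> 0" and y: "H y \<noteq> 0" and xy: "(\<lambda>i. x i + y i) = \<mu>" for x y
  proof -
    have "mi_order n x + mi_order n y = e + d" using arg_cong[OF xy, of "mi_order n"] ordmu by (simp add: mi_order_add)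
    moreover have "mi_order n x \<le> e" "mi_order n y \<le> d" using x y be bd by auto
    ultimately have xT: "x \<in> TW" and yT: "y \<in> TH" using x y by (auto simp: TW_def TH_def)
    have "wt n N x + wt n N y = wt n N a + wt n N b"
      using arg_cong[OF xy, of "wt n N"] by (simp add: wt_add \<mu>_def)
    moreover have "wt n N x \<le> wt n N a" "wt n N y \<le> wt n N b" using a(2) b(2) xT yT by auto
    ultimately have eqw: "wt n N x = wt n N a" by linarith
    have xN: "\<forall>i<n. x i < N"
    proof (intro allI impI)
      fix i assume "i < n"
      then have "x i \<le> mi_order n x" by (rule coord_le)
      then show "x i < N" using xT by (simp add: TW_def N_def)
    qed
    have aN: "\<forall>i<n. a i < N"
    proof (intro allI impI)
      fix i assume "i < n"
      then have "a i \<le> mi_order n a" by (rule coord_le)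
      then show "a i < N" using a(1) by (simp add: TW_def N_def)
    qed
    have lo: "\<forall>i<n. x i = a i" by (rule winj[OF xN aN eqw[unfolded wt_def]])
    have mx: "multi_index n x" using x W by (auto simp: is_pdo_def)
    have ma: "multi_index n a" using a(1) W by (auto simp: is_pdo_def TW_def)
    have xa: "x = a"
    proof
      fix i show "x i = a i"
      proof (cases "i < n")
        case True then show ?thesis using lo by simp
      next
        case False then show ?thesis using mx ma unfolding multi_index_def by simp
      qed
    qed
    moreover have "y = b"
    proof
      fix i have "x i + y i = a i + b i" using fun_cong[OF xy, of i] by (simp add: \<mu>_def)
      then show "y i = b i" using xa by simp
    qed
    ultimately show ?thesis by simp
  qed
  have aW: "a \<in> {\<alpha>. W \<alpha> \<noteq> 0}" and bH: "b \<in> {\<beta>. H \<beta> \<noteq> 0}" using a(1) b(1) by (auto simp: TW_def TH_def)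
  have pw: "(if (\<lambda>i. x i + y i) = \<mu> then W x * H y else 0) =
      (if y = b then (if x = a then W a * H b else 0) else 0)"
    if "W x \<noteq> 0" "H y \<noteq> 0" for x y
  proof (cases "(\<lambda>i. x i + y i) = \<mu>")
    case True
    then show ?thesis using uniq[OF that True] by simp
  next
    case False
    then have "\<not> (x = a \<and> y = b)" unfolding \<mu>_def by blast
    then show ?thesis using False by auto
  qed
  have "(\<Sum>\<alpha>\<in>{\<alpha>. W \<alpha> \<noteq> 0}. \<Sum>\<beta>\<in>{\<beta>. H \<beta> \<noteq> 0}.
           (if (\<lambda>i. \<alpha> i + \<beta> i) = \<mu> then W \<alpha> * H \<beta> else 0)) =
        (\<Sum>\<alpha>\<in>{\<alpha>. W \<alpha> \<noteq> 0}. \<Sum>\<beta>\<in>{\<beta>. H \<beta> \<noteq> 0}.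
           (if \<beta> = b then (if \<alpha> = a then W a * H b else 0) else 0))"
    by (intro sum.cong refl) (use pw in simp)
  also have "\<dots> = W a * H b" using aW bH fW fH by simp
  also have "\<dots> \<noteq> 0" using aW bH by simp
  finally have nz: "(\<Sum>\<alpha>\<in>{\<alpha>. W \<alpha> \<noteq> 0}. \<Sum>\<beta>\<in>{\<beta>. H \<beta> \<noteq> 0}.
           (if (\<lambda>i. \<alpha> i + \<beta> i) = \<mu> then W \<alpha> * H \<beta> else 0)) \<noteq> 0" .
  show ?thesis by (intro exI[where x=\<mu>] conjI ordmu nz)
qed


theorem lemma2:
  fixes n :: nat and \<delta> :: "nat \<Rightarrow> 'a::field_char_0 \<Rightarrow> 'a"
    and X2 H :: "(nat \<Rightarrow> nat) \<Rightarrow> 'a"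
  assumes "diff_field n \<delta>"
    and "is_pdo n X2" and "first_order n X2"
    and "is_pdo n H" and "H \<noteq> pdo_zero"
  shows "rquot_is_pdo n \<delta> (pdo_neg (pdo_comm n \<delta> X2 H)) H \<longleftrightarrow>
         (\<exists>\<psi>::'a. pdo_mult n \<delta> H X2 = pdo_mult n \<delta> (pdo_add X2 (pdo_const \<psi>)) H)"
proof
  assume "rquot_is_pdo n \<delta> (pdo_neg (pdo_comm n \<delta> X2 H)) H"
  then obtain W where Wp: "is_pdo n W" and eq: "pdo_mult n \<delta> W H = pdo_neg (pdo_comm n \<delta> X2 H)"
    unfolding rquot_is_pdo_def by blast
  have eqm: "pdo_mult n \<delta> W H \<mu> = pdo_mult n \<delta> H X2 \<mu> - pdo_mult n \<delta> X2 H \<mu>" for \<mu>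
    using fun_cong[OF eq, of \<mu>] by (simp add: pdo_neg_def pdo_comm_def)
  have fW: "finite {\<alpha>. W \<alpha> \<noteq> 0}" and fH: "finite {\<alpha>. H \<alpha> \<noteq> 0}"
    using Wp assms(4) by (auto simp: is_pdo_def)
  have b1: "\<And>\<alpha>. X2 \<alpha> \<noteq> 0 \<Longrightarrow> mi_order n \<alpha> \<le> 1" using assms(3) by (auto simp: first_order_def)
  have Hne: "{\<alpha>. H \<alpha> \<noteq> 0} \<noteq> {}" using assms(5) by (auto simp: pdo_zero_def)
  define d where "d = Max (mi_order n ` {\<alpha>. H \<alpha> \<noteq> 0})"
  have bd: "\<And>\<alpha>. H \<alpha> \<noteq> 0 \<Longrightarrow> mi_order n \<alpha> \<le> d" unfolding d_def using fH by auto
  have ed: "\<exists>\<alpha>. H \<alpha> \<noteq> 0 \<and> mi_order n \<alpha> = d"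
  proof -
    have "d \<in> mi_order n ` {\<alpha>. H \<alpha> \<noteq> 0}" unfolding d_def using fH Hne by (intro Max_in) auto
    then show ?thesis by auto
  qed
  have ord0: "mi_order n \<alpha> = 0" if "W \<alpha> \<noteq> 0" for \<alpha>
  proof (rule ccontr)
    assume nz: "mi_order n \<alpha> \<noteq> 0"
    define e where "e = Max (mi_order n ` {\<alpha>. W \<alpha> \<noteq> 0})"
    have be: "\<And>\<alpha>. W \<alpha> \<noteq> 0 \<Longrightarrow> mi_order n \<alpha> \<le> e" unfolding e_def using fW by auto
    have ee: "\<exists>\<alpha>. W \<alpha> \<noteq> 0 \<and> mi_order n \<alpha> = e"
    proof -
      have "e \<in> mi_order n ` {\<alpha>. W \<alpha> \<noteq> 0}" unfolding e_def using fW that by (intro Max_in) auto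
      then show ?thesis by auto
    qed
    have e1: "e \<ge> 1" using be[OF that] nz by simp
    from top_nonzero[OF Wp assms(4) be ee bd ed]
    obtain \<mu> where omn: "mi_order n \<mu> = e + d \<and> (\<Sum>\<alpha>\<in>{\<alpha>. W \<alpha> \<noteq> 0}. \<Sum>\<beta>\<in>{\<beta>. H \<beta> \<noteq> 0}.
           (if (\<lambda>i. \<alpha> i + \<beta> i) = \<mu> then W \<alpha> * H \<beta> else 0)) \<noteq> 0" ..
    note om = conjunct1[OF omn] and nzs = conjunct2[OF omn]
    have s1: "pdo_mult n \<delta> W H \<mu> = (\<Sum>\<alpha>\<in>{\<alpha>. W \<alpha> \<noteq> 0}. \<Sum>\<beta>\<in>{\<beta>. H \<beta> \<noteq> 0}.
           (if (\<lambda>i. \<alpha> i + \<beta> i) = \<mu> then W \<alpha> * H \<beta> else 0))"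
      by (rule symb[OF Wp assms(4), where p=e and q=d]) (use be bd om in auto)
    have s2: "pdo_mult n \<delta> H X2 \<mu> = (\<Sum>\<alpha>\<in>{\<alpha>. H \<alpha> \<noteq> 0}. \<Sum>\<beta>\<in>{\<beta>. X2 \<beta> \<noteq> 0}.
           (if (\<lambda>i. \<alpha> i + \<beta> i) = \<mu> then H \<alpha> * X2 \<beta> else 0))"
      by (rule symb[OF assms(4) assms(2), where p=d and q=1]) (use bd b1 om e1 in auto)
    have s3: "pdo_mult n \<delta> X2 H \<mu> = (\<Sum>\<alpha>\<in>{\<alpha>. X2 \<alpha> \<noteq> 0}. \<Sum>\<beta>\<in>{\<beta>. H \<beta> \<noteq> 0}.
           (if (\<lambda>i. \<alpha> i + \<beta> i) = \<mu> then X2 \<alpha> * H \<beta> else 0))"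
      by (rule symb[OF assms(2) assms(4), where p=1 and q=d]) (use bd b1 om e1 in auto)
    have "pdo_mult n \<delta> H X2 \<mu> = pdo_mult n \<delta> X2 H \<mu>"
      unfolding s2 s3 by (rule symb_comm)
    then have "pdo_mult n \<delta> W H \<mu> = 0" using eqm[of \<mu>] by simp
    then show False using nzs s1 by simp
  qed
  define \<psi> where "\<psi> = W (\<lambda>_. 0)"
  have Wc: "W = pdo_const \<psi>"
  proof
    fix \<mu>
    show "W \<mu> = pdo_const \<psi> \<mu>"
    proof (cases "W \<mu> = 0")
      case True
      then show ?thesis by (auto simp: pdo_const_def \<psi>_def)
    next
      case False
      have "mi_order n \<mu> = 0" using ord0[OF False] .
      hence "\<forall>i<n. \<mu> i = 0" by (simp add: mi_order_def)
      moreover have "multi_index n \<mu>" using Wp False by (auto simp: is_pdo_def)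
      ultimately have "\<mu> = (\<lambda>_. 0)" unfolding multi_index_def
        by (intro ext) (metis not_less)
      then show ?thesis by (simp add: pdo_const_def \<psi>_def)
    qed
  qed
  have "pdo_mult n \<delta> H X2 = pdo_mult n \<delta> (pdo_add X2 (pdo_const \<psi>)) H"
  proof
    fix \<mu>
    show "pdo_mult n \<delta> H X2 \<mu> = pdo_mult n \<delta> (pdo_add X2 (pdo_const \<psi>)) H \<mu>"
      using pdo_mult_add_left[OF assms(2) const_pdo[of n \<psi>], where \<delta>=\<delta> and R=H and \<mu>=\<mu>] eqm[of \<mu>] Wc by simp
  qed
  then show "\<exists>\<psi>::'a. pdo_mult n \<delta> H X2 = pdo_mult n \<delta> (pdo_add X2 (pdo_const \<psi>)) H" by blast
next
  assume "\<exists>\<psi>::'a. pdo_mult n \<delta> H X2 = pdo_mult n \<delta> (pdo_add X2 (pdo_const \<psi>)) H"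
  then obtain \<psi> where h: "pdo_mult n \<delta> H X2 = pdo_mult n \<delta> (pdo_add X2 (pdo_const \<psi>)) H" by blast
  have "pdo_mult n \<delta> (pdo_const \<psi>) H = pdo_neg (pdo_comm n \<delta> X2 H)"
  proof
    fix \<mu>
    show "pdo_mult n \<delta> (pdo_const \<psi>) H \<mu> = pdo_neg (pdo_comm n \<delta> X2 H) \<mu>"
      using pdo_mult_add_left[OF assms(2) const_pdo[of n \<psi>], where \<delta>=\<delta> and R=H and \<mu>=\<mu>] fun_cong[OF h, of \<mu>]
      by (simp add: pdo_neg_def pdo_comm_def)
  qed
  then show "rquot_is_pdo n \<delta> (pdo_neg (pdo_comm n \<delta> X2 H)) H"
    unfolding rquot_is_pdo_def using const_pdo by blast
qed

end
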